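(* Let $x_1,\dots,x_n\in\mathbb{R}^2$ satisfy $x_i\prec x_j$ whenever $i<j$, and let $p\ge 2$. For $k\in\{2,\dots,p\}$ and $i\in\{k,\dots,n\}$, let $C^{MSN}_{k,i}$ be the optimal value of the Max-Sum-Neighbor $k$-dispersion problem among the points $x_1,\dots,x_i$, i.e. $C^{MSN}_{k,i}=\max_{1\le i_1<\dots<i_k\le i}\sum_{j=1}^{k-1}d_{i_j,i_{j+1}}$. Then $C^{MSN}_{2,i}=d_{1,i}$ for all $i\in\{2,\dots,n\}$, and for all $k\in\{3,\dots,p\}$ and $i\in\{k,\dots,n\}$, $$C^{MSN}_{k,i}=\max_{j\in\{k-1,\dots,i-1\}}\left(C^{MSN}_{k-1,j}+d_{j,i}\right).$$
   Context: For $y=(y^1,y^2),z=(z^1,z^2)\in\mathbb{R}^2$ write $y\prec z$ iff $y^1<z^1$ and $y^2>z^2$. Fix $\alpha>0$, let $d$ be the Euclidean distance, and set $d_{ij}=d(x_i,x_j)^\alpha$. *)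

theory Defs
  imports "HOL-Analysis.Analysis"
begin

text \<open>Points of R^2 are modelled as real \<times> real; dist on the product is Euclidean.\<close>

definition prec :: "real \<times> real \<Rightarrow> real \<times> real \<Rightarrow> bool" where
  "prec y z \<longleftrightarrow> fst y < fst z \<and> snd y > snd z"

definition dd :: "real \<Rightarrow> (nat \<Rightarrow> real \<times> real) \<Rightarrow> nat \<Rightarrow> nat \<Rightarrow> real" where
  "dd \<alpha> x i j = dist (x i) (x j) powr \<alpha>"

definition msn :: "real \<Rightarrow> (nat \<Rightarrow> real \<times> real) \<Rightarrow> nat \<Rightarrow> nat \<Rightarrow> real" where
  "msn \<alpha> x k i = Max {(\<Sum>j=1..k-1. dd \<alpha> x (s j) (s (j+1))) | s :: nat \<Rightarrow> nat.
      (\<forall>j\<in>{1..k}. 1 \<le> s j \<and> s j \<le> i) \<and> (\<forall>j. 1 \<le> j \<and> j < k \<longrightarrow> s j < s (j+1))}"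

end

theory Submission
  imports Defs
begin

definition chn :: "nat \<Rightarrow> nat \<Rightarrow> (nat \<Rightarrow> nat) \<Rightarrow> bool" where
  "chn k i s \<longleftrightarrow> (\<forall>j\<in>{1..k}. 1 \<le> s j \<and> s j \<le> i) \<and> (\<forall>j. 1 \<le> j \<and> j < k \<longrightarrow> s j < s (j+1))"

definition val :: "real \<Rightarrow> (nat \<Rightarrow> real \<times> real) \<Rightarrow> nat \<Rightarrow> (nat \<Rightarrow> nat) \<Rightarrow> real" where
  "val a x k s = (\<Sum>j=1..k-1. dd a x (s j) (s (j+1)))"

lemma chn_step: "chn k i s \<Longrightarrow> 1 \<le> j \<Longrightarrow> j < k \<Longrightarrow> s j < s (j+1)"
  unfolding chn_def by blast

lemma chn_rng: "chn k i s \<Longrightarrow> 1 \<le> j \<Longrightarrow> j \<le> k \<Longrightarrow> 1 \<le> s j \<and> s j \<le> i"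
  unfolding chn_def by auto

lemma msn_alt: "msn a x k i = Max {val a x k s | s. chn k i s}"
  by (simp add: msn_def chn_def val_def)

lemma val_restrict: "val a x k (restrict s {1..k}) = val a x k s"
  unfolding val_def by (rule sum.cong) auto

lemma fin: "finite {val a x k s | s. chn k i s}"
proof (rule finite_subset)
  show "{val a x k s | s. chn k i s} \<subseteq> (\<lambda>t. val a x k t) ` ({1..k} \<rightarrow>\<^sub>E {0..i})"
  proof
    fix v assume "v \<in> {val a x k s | s. chn k i s}"
    then obtain s where v: "v = val a x k s" and c: "chn k i s" by blast
    have "restrict s {1..k} \<in> {1..k} \<rightarrow>\<^sub>E {0..i}" using c unfolding chn_def by auto
    moreover have "v = val a x k (restrict s {1..k})" using v val_restrict by metis
    ultimately show "v \<in> (\<lambda>t. val a x k t) ` ({1..k} \<rightarrow>\<^sub>E {0..i})" by blast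
  qed
  show "finite ((\<lambda>t. val a x k t) ` ({1..k} \<rightarrow>\<^sub>E {0..i}))" by (intro finite_imageI finite_PiE) auto
qed

lemma msn_ge: "chn k i s \<Longrightarrow> val a x k s \<le> msn a x k i"
  unfolding msn_alt by (rule Max_ge[OF fin]) blast

lemma msn_le: "chn k i s \<Longrightarrow> (\<And>t. chn k i t \<Longrightarrow> val a x k t \<le> v) \<Longrightarrow> msn a x k i \<le> v"
  unfolding msn_alt by (subst Max_le_iff[OF fin]) blast+

lemma msn_in: "chn k i s \<Longrightarrow> \<exists>t. chn k i t \<and> msn a x k i = val a x k t"
proof -
  assume "chn k i s"
  hence "{val a x k s | s. chn k i s} \<noteq> {}" by blast
  from Max_in[OF fin this] show ?thesis unfolding msn_alt by blast
qed

lemma chn_ge: "chn k i s \<Longrightarrow> j \<in> {1..k} \<Longrightarrow> j \<le> s j"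
proof (induction j)
  case 0 then show ?case by simp
next
  case (Suc j)
  show ?case
  proof (cases "j = 0")
    case True then show ?thesis using Suc unfolding chn_def by auto
  next
    case False
    then have "j \<le> s j" using Suc by auto
    moreover have "s j < s (j+1)" using Suc False unfolding chn_def by auto
    ultimately show ?thesis by simp
  qed
qed

lemma chn_mono: "chn k i s \<Longrightarrow> 1 \<le> m \<Longrightarrow> m \<le> m' \<Longrightarrow> m' \<le> k \<Longrightarrow> s m \<le> s m'"
proof (induction m')
  case 0 then show ?case by simp
next
  case (Suc m')
  show ?case
  proof (cases "m = Suc m'")
    case False
    then have "s m \<le> s m'" using Suc by auto
    moreover have "s m' < s (m'+1)" using Suc False unfolding chn_def by auto
    ultimately show ?thesis by simp
  qed simp
qed

lemma id_chn: "1 \<le> k \<Longrightarrow> k \<le> i \<Longrightarrow> chn k i (\<lambda>j. j)"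
  unfolding chn_def by auto

lemma mono_coord:
  fixes x :: "nat \<Rightarrow> real \<times> real"
  assumes "\<And>i j. 1 \<le> i \<Longrightarrow> i < j \<Longrightarrow> j \<le> n \<Longrightarrow> prec (x i) (x j)"
    and "1 \<le> i" "i \<le> j" "j \<le> n"
  shows "fst (x i) \<le> fst (x j) \<and> snd (x j) \<le> snd (x i)"
proof (cases "i = j")
  case False
  then have "prec (x i) (x j)" using assms(1)[of i j] assms(2-4) by auto
  then show ?thesis unfolding prec_def by auto
qed simp

lemma dd_mono:
  fixes \<alpha> :: real and n :: nat and x :: "nat \<Rightarrow> real \<times> real" and a' a b b' :: nat
  assumes "\<alpha> > 0" "\<And>i j. 1 \<le> i \<Longrightarrow> i < j \<Longrightarrow> j \<le> n \<Longrightarrow> prec (x i) (x j)"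
    and "1 \<le> a'" "a' \<le> a" "a < b" "b \<le> b'" "b' \<le> n"
  shows "dd \<alpha> x a b \<le> dd \<alpha> x a' b'"
proof -
  have h1: "fst (x a') \<le> fst (x a) \<and> snd (x a) \<le> snd (x a')" using mono_coord[of n x a' a, OF assms(2)] assms by auto
  have h2: "fst (x a) \<le> fst (x b) \<and> snd (x b) \<le> snd (x a)" using mono_coord[of n x a b, OF assms(2)] assms by auto
  have h3: "fst (x b) \<le> fst (x b') \<and> snd (x b') \<le> snd (x b)" using mono_coord[of n x b b', OF assms(2)] assms by auto
  have e1: "dist (fst (x a)) (fst (x b)) \<le> dist (fst (x a')) (fst (x b'))"
    using h1 h2 h3 by (simp add: dist_real_def)
  have e2: "dist (snd (x a)) (snd (x b)) \<le> dist (snd (x a')) (snd (x b'))"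
    using h1 h2 h3 by (simp add: dist_real_def)
  have "dist (x a) (x b) \<le> dist (x a') (x b')"
    unfolding dist_prod_def
    by (intro real_sqrt_le_mono add_mono power_mono e1 e2) auto
  then show ?thesis unfolding dd_def using assms(1) by (intro powr_mono2) auto
qed

theorem proposition8:
  fixes x :: "nat \<Rightarrow> real \<times> real" and n p :: nat and \<alpha> :: real
  assumes "\<alpha> > 0"
    and "\<And>i j. 1 \<le> i \<Longrightarrow> i < j \<Longrightarrow> j \<le> n \<Longrightarrow> prec (x i) (x j)"
    and "p \<ge> 2"
  shows "(\<forall>i\<in>{2..n}. msn \<alpha> x 2 i = dd \<alpha> x 1 i) \<and>
         (\<forall>k\<in>{3..p}. \<forall>i\<in>{k..n}.
            msn \<alpha> x k i = Max ((\<lambda>j. msn \<alpha> x (k-1) j + dd \<alpha> x j i) ` {k-1..i-1}))"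
proof (intro conjI ballI)
  fix i assume i: "i \<in> {2..n}"
  define s0 where "s0 = (\<lambda>j::nat. if j = 1 then 1 else i)"
  have c0: "chn 2 i s0" using i unfolding chn_def s0_def by auto
  have v0: "val \<alpha> x 2 s0 = dd \<alpha> x 1 i" unfolding val_def s0_def by simp
  show "msn \<alpha> x 2 i = dd \<alpha> x 1 i"
  proof (rule antisym)
    show "msn \<alpha> x 2 i \<le> dd \<alpha> x 1 i"
    proof (rule msn_le[OF c0])
      fix t assume t: "chn 2 i t"
      have "t 1 < t 2" using chn_step[OF t, of 1] by (simp add: numeral_2_eq_2)
      then have "1 \<le> t 1" "t 1 < t 2" "t 2 \<le> i" using chn_rng[OF t, of 1] chn_rng[OF t, of 2] by auto
      then show "val \<alpha> x 2 t \<le> dd \<alpha> x 1 i" unfolding val_def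
        using dd_mono[of \<alpha> n x 1 "t 1" "t 2" i, OF assms(1,2)] i by simp (metis numeral_2_eq_2)
    qed
    show "dd \<alpha> x 1 i \<le> msn \<alpha> x 2 i" using msn_ge[OF c0, of \<alpha> x] v0 by simp
  qed
next
  fix k i assume k: "k \<in> {3..p}" and i: "i \<in> {k..n}"
  define f where "f = (\<lambda>j. msn \<alpha> x (k-1) j + dd \<alpha> x j i)"
  have finJ: "finite {k-1..i-1}" and neJ: "{k-1..i-1} \<noteq> {}" using k i by auto
  have split: "val \<alpha> x k s = val \<alpha> x (k-1) s + dd \<alpha> x (s (k-1)) (s k)" for s
  proof -
    have "k = Suc (Suc (k-2))" using k by auto
    then obtain m where m: "k = Suc (Suc m)" by blast
    have "m \<ge> 1" using k m by auto
    show ?thesis unfolding val_def m by (simp add: sum.cl_ivl_Suc)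
  qed
  show "msn \<alpha> x k i = Max (f ` {k-1..i-1})"
  proof (rule antisym)
    have cid: "chn k i (\<lambda>j. j)" using k i by (intro id_chn) auto
    show "msn \<alpha> x k i \<le> Max (f ` {k-1..i-1})"
    proof (rule msn_le[OF cid])
      fix s assume s: "chn k i s"
      define j where "j = s (k-1)"
      have j1: "k - 1 \<le> j" unfolding j_def using chn_ge[OF s, of "k-1"] k by auto
      have "s (k-1) < s (k-1+1)" using chn_step[OF s, of "k-1"] k by auto
      moreover have "k-1+1 = k" using k by auto
      ultimately have sk: "s (k-1) < s k" "s k \<le> i" using chn_rng[OF s, of k] k by auto
      have jr: "j \<in> {k-1..i-1}" using j1 sk unfolding j_def by auto
      have cs: "chn (k-1) j s" unfolding chn_def j_def
      proof (intro conjI ballI allI impI)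
        fix m assume m: "m \<in> {1..k-1}"
        show "1 \<le> s m" using s m unfolding chn_def by auto
        show "s m \<le> s (k-1)" using chn_mono[OF s, of m "k-1"] m by auto
      next
        fix m assume "1 \<le> m \<and> m < k-1"
        then show "s m < s (m+1)" using s unfolding chn_def by auto
      qed
      have "val \<alpha> x k s \<le> msn \<alpha> x (k-1) j + dd \<alpha> x j i"
        unfolding split
      proof (rule add_mono)
        show "val \<alpha> x (k-1) s \<le> msn \<alpha> x (k-1) j" by (rule msn_ge[OF cs])
        have "1 \<le> s (k-1)" using s k unfolding chn_def by auto
        then show "dd \<alpha> x (s (k-1)) (s k) \<le> dd \<alpha> x j i"
          using dd_mono[of \<alpha> n x j "s (k-1)" "s k" i, OF assms(1,2)] sk i unfolding j_def by auto
      qed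
      also have "\<dots> \<le> Max (f ` {k-1..i-1})" unfolding f_def using jr finJ by (intro Max_ge) auto
      finally show "val \<alpha> x k s \<le> Max (f ` {k-1..i-1})" .
    qed
    have "Max (f ` {k-1..i-1}) \<in> f ` {k-1..i-1}" using Max_in[of "f ` {k-1..i-1}"] finJ neJ by blast
    then obtain j where jr: "j \<in> {k-1..i-1}" and fj: "Max (f ` {k-1..i-1}) = f j" by blast
    have cj: "chn (k-1) j (\<lambda>j. j)" using jr k by (intro id_chn) auto
    obtain t where t: "chn (k-1) j t" and tv: "msn \<alpha> x (k-1) j = val \<alpha> x (k-1) t"
      using msn_in[OF cj] by blast
    define s where "s = t(k := i)"
    have tk: "1 \<le> t (k-1)" "t (k-1) \<le> j" using t k unfolding chn_def by auto
    have cs: "chn k i s" unfolding chn_def s_def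
    proof (intro conjI ballI allI impI)
      fix m assume m: "m \<in> {1..k}"
      show "1 \<le> (t(k := i)) m" using m t jr k unfolding chn_def by (cases "m = k") auto
      show "(t(k := i)) m \<le> i"
      proof (cases "m = k")
        case False
        then have "t m \<le> j" using chn_rng[OF t, of m] m by auto
        then show ?thesis using False jr by auto
      qed simp
    next
      fix m assume m: "1 \<le> m \<and> m < k"
      show "(t(k := i)) m < (t(k := i)) (m + 1)"
      proof (cases "m + 1 = k")
        case True then show ?thesis using tk jr m by auto
      next
        case False then show ?thesis using t m unfolding chn_def by auto
      qed
    qed
    have vs: "val \<alpha> x (k-1) s = val \<alpha> x (k-1) t" unfolding val_def s_def
      by (rule sum.cong) auto
    have "f j = val \<alpha> x (k-1) t + dd \<alpha> x j i" unfolding f_def tv ..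
    also have "\<dots> \<le> val \<alpha> x k s"
      unfolding split vs
    proof -
      have "s (k-1) = t (k-1)" "s k = i" unfolding s_def using k by auto
      moreover have "dd \<alpha> x j i \<le> dd \<alpha> x (t (k-1)) i"
        using dd_mono[of \<alpha> n x "t (k-1)" j i i, OF assms(1,2)] tk jr i k by auto
      ultimately show "val \<alpha> x (k - 1) t + dd \<alpha> x j i \<le> val \<alpha> x (k - 1) t + dd \<alpha> x (s (k - 1)) (s k)" by simp
    qed
    also have "\<dots> \<le> msn \<alpha> x k i" by (rule msn_ge[OF cs])
    finally show "Max (f ` {k-1..i-1}) \<le> msn \<alpha> x k i" using fj by simp
  qed
qed

end
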